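(* Let $\Omega\subset\mathbb{R}^n$ be a bounded convex domain with smooth boundary and outer unit normal $\nu$, let $\vec f:\Omega\times\mathbb{R}\times[0,\infty)\to\mathbb{R}^{n+1}$, and let $u$ be a classical solution, $C^2$ up to $\partial\Omega$ in space for each $t>0$, of \[ \frac{\partial_t u}{\sqrt{1+|du|^2}}=\operatorname{div}\Big(\frac{du}{\sqrt{1+|du|^2}}\Big)+\vec f(x,u,t)\cdot\vec n\ \text{ in }\Omega,\ t>0,\qquad du\cdot\nu|_{\partial\Omega}=0,\ t>0, \] with $\vec n=\frac{1}{\sqrt{1+|du|^2}}(-du,1)$. Let $v:=\sqrt{1+|du|^2}$. Then for all $t>0$, \[ (D_{\Gamma_t}v\cdot\vec\nu)\big|_{\partial(\Omega\times\mathbb{R})}\le 0 . \]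
   Context: $\Gamma_t=\{(x,u(x,t)):x\in\Omega\}$. $v$ is regarded as a function on $\Omega\times\mathbb{R}$ independent of $x_{n+1}$, $D$ is the gradient in $\mathbb{R}^{n+1}$, and $D_{\Gamma_t}v:=Dv-(Dv\cdot\vec n)\vec n$ is its tangential gradient along $\Gamma_t$. $\vec\nu=(\nu,0)$ is the outer unit normal of the cylinder $\Omega\times\mathbb{R}$; the inequality is evaluated at the boundary points $(x,u(x,t))$, $x\in\partial\Omega$. *)

theory Defs
  imports "HOL-Analysis.Analysis"
begin

text \<open>Gradient of a real function on R^n, taken as the Frechet derivative
  within a set S (for S = closure of a convex domain this gives the
  derivative up to the boundary; at interior points it is the usual gradient).\<close>
definition gradw :: "(real^'n) set \<Rightarrow> (real^'n \<Rightarrow> real) \<Rightarrow> real^'n \<Rightarrow> real^'n" where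
  "gradw S g x = (\<chi> i. frechet_derivative g (at x within S) (axis i 1))"

definition divw :: "(real^'n) set \<Rightarrow> (real^'n \<Rightarrow> real^'n) \<Rightarrow> real^'n \<Rightarrow> real" where
  "divw S F x = (\<Sum>i\<in>UNIV. gradw S (\<lambda>y. F y $ i) x $ i)"

definition C2_upto :: "(real^'n) set \<Rightarrow> (real^'n \<Rightarrow> real) \<Rightarrow> bool" where
  "C2_upto S g \<longleftrightarrow>
     (\<forall>x\<in>S. g differentiable (at x within S)) \<and>
     (\<forall>i. \<forall>x\<in>S. (\<lambda>y. gradw S g y $ i) differentiable (at x within S)) \<and>
     (\<forall>i j. continuous_on S (\<lambda>y. gradw S (\<lambda>z. gradw S g z $ i) y $ j))"

fun Ck :: "nat \<Rightarrow> (real^'n \<Rightarrow> real) \<Rightarrow> bool" where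
  "Ck 0 g = continuous_on UNIV g"
| "Ck (Suc k) g = ((\<forall>x. g differentiable (at x)) \<and>
                   (\<forall>i. Ck k (\<lambda>x. frechet_derivative g (at x) (axis i 1))))"

definition smooth_fun :: "(real^'n \<Rightarrow> real) \<Rightarrow> bool" where
  "smooth_fun g \<longleftrightarrow> (\<forall>k. Ck k g)"

end

theory Submission
  imports Defs
begin

lemma lin_expand:
  fixes L :: "real^'n \<Rightarrow> real"
  assumes "linear L"
  shows "L h = (\<Sum>k\<in>UNIV. h$k * L (axis k 1))"
proof -
  have "L h = L (\<Sum>k\<in>UNIV. h$k *\<^sub>R axis k 1)"
    using basis_expansion[of h] by (simp add: scalar_mult_eq_scaleR)
  also have "\<dots> = (\<Sum>k\<in>UNIV. h$k * L (axis k 1))"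
    using assms by (simp add: linear_sum linear_scale)
  finally show ?thesis .
qed

lemma sum_axis: "(\<Sum>k\<in>UNIV. (axis i (1::real))$k * D k) = (D i :: real)"
proof -
  have "\<And>k. (axis i (1::real))$k * D k = (if k = i then D k else 0)" by (simp add: axis_def)
  then show ?thesis by simp
qed

lemma dir_mvt:
  fixes F :: "real^'n \<Rightarrow> real" and D :: "'n \<Rightarrow> real^'n \<Rightarrow> real"
  assumes "0 \<le> s"
    and der: "\<And>\<tau>. \<tau> \<in> {0..s} \<Longrightarrow>
       (F has_derivative (\<lambda>h. \<Sum>k\<in>UNIV. h$k * D k (c + \<tau> *\<^sub>R axis i 1))) (at (c + \<tau> *\<^sub>R axis i 1))"
  shows "\<exists>\<tau>\<in>{0..s}. F (c + s *\<^sub>R axis i 1) - F c = s * D i (c + \<tau> *\<^sub>R axis i 1)"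
proof -
  define \<phi> where "\<phi> \<tau> = F (c + \<tau> *\<^sub>R axis i 1)" for \<tau>
  have "(\<phi> has_derivative (\<lambda>d. d * D i (c + \<tau> *\<^sub>R axis i 1))) (at \<tau> within {0..s})"
    if "\<tau> \<in> {0..s}" for \<tau>
  proof -
    have f: "((\<lambda>\<tau>. c + \<tau> *\<^sub>R axis i (1::real)) has_derivative (\<lambda>d. d *\<^sub>R axis i 1)) (at \<tau> within {0..s})"
      by (auto intro!: derivative_eq_intros)
    have "((\<lambda>\<tau>. F (c + \<tau> *\<^sub>R axis i 1)) has_derivative
        (\<lambda>d. (\<Sum>k\<in>UNIV. (d *\<^sub>R axis i 1)$k * D k (c + \<tau> *\<^sub>R axis i 1)))) (at \<tau> within {0..s})"
      using has_derivative_compose[OF f der[OF that]] by simp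
    moreover have "(\<lambda>d. (\<Sum>k\<in>UNIV. (d *\<^sub>R axis i (1::real))$k * D k (c + \<tau> *\<^sub>R axis i 1)))
        = (\<lambda>d. d * D i (c + \<tau> *\<^sub>R axis i 1))"
    proof
      fix d
      have "\<And>k. (d *\<^sub>R axis i (1::real))$k * D k (c + \<tau> *\<^sub>R axis i 1) = (if k = i then d * D k (c + \<tau> *\<^sub>R axis i 1) else 0)"
        by (simp add: axis_def)
      then show "(\<Sum>k\<in>UNIV. (d *\<^sub>R axis i (1::real))$k * D k (c + \<tau> *\<^sub>R axis i 1)) = d * D i (c + \<tau> *\<^sub>R axis i 1)"
        by simp
    qed
    ultimately show ?thesis unfolding \<phi>_def[abs_def] by simp
  qed
  from mvt_very_simple[OF assms(1) this] show ?thesis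
    by (auto simp: \<phi>_def)
qed

lemma shift_deriv:
  fixes f :: "real^'n \<Rightarrow> real"
  assumes "(f has_derivative f') (at (z + w))"
  shows "((\<lambda>z. f (z + w)) has_derivative f') (at z)"
proof -
  have "((\<lambda>z. z + w) has_derivative (\<lambda>h. h)) (at z)" by (auto intro!: derivative_eq_intros)
  from has_derivative_compose[OF this assms] show ?thesis by simp
qed

lemma norm2_le: "norm (a *\<^sub>R axis i (1::real) + b *\<^sub>R axis j 1 :: real^'n) \<le> \<bar>a\<bar> + \<bar>b\<bar>"
  using norm_triangle_ineq[of "a *\<^sub>R axis i (1::real)" "b *\<^sub>R axis j 1"] by simp

lemma schwarz_half:
  fixes U :: "real^'n \<Rightarrow> real" and G :: "'n \<Rightarrow> real^'n \<Rightarrow> real"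
    and H :: "'n \<Rightarrow> 'n \<Rightarrow> real^'n \<Rightarrow> real"
  assumes dU: "\<And>z. z \<in> A \<Longrightarrow> (U has_derivative (\<lambda>h. \<Sum>k\<in>UNIV. h$k * G k z)) (at z)"
    and dG: "\<And>k z. z \<in> A \<Longrightarrow> (G k has_derivative (\<lambda>h. \<Sum>l\<in>UNIV. h$l * H k l z)) (at z)"
    and sub: "cball y (2 * s) \<subseteq> A" and s: "0 \<le> s"
  shows "\<exists>p. dist p y \<le> 2 * s \<and>
    U (y + s *\<^sub>R axis i 1 + s *\<^sub>R axis j 1) - U (y + s *\<^sub>R axis i 1) - U (y + s *\<^sub>R axis j 1) + U y
      = s * s * H i j p"
proof -
  have inA: "y + a *\<^sub>R axis i 1 + b *\<^sub>R axis j 1 \<in> A" if "a \<in> {0..s}" "b \<in> {0..s}" for a b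
  proof -
    have "dist (y + a *\<^sub>R axis i 1 + b *\<^sub>R axis j 1) y \<le> 2 * s"
      using norm2_le[of a i b j] that by (simp add: dist_norm)
    then show ?thesis using sub by (auto simp: dist_commute)
  qed
  define F where "F z = U (z + s *\<^sub>R axis j 1) - U z" for z
  define D where "D k z = G k (z + s *\<^sub>R axis j 1) - G k z" for k z
  have "\<exists>\<tau>\<in>{0..s}. F (y + s *\<^sub>R axis i 1) - F y = s * D i (y + \<tau> *\<^sub>R axis i 1)"
  proof (rule dir_mvt[OF s])
    fix \<tau> assume t: "\<tau> \<in> {0..s}"
    have a1: "y + \<tau> *\<^sub>R axis i 1 + s *\<^sub>R axis j 1 \<in> A" using inA[OF t, of s] s by auto
    have a2: "y + \<tau> *\<^sub>R axis i 1 \<in> A" using inA[OF t, of 0] s by auto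
    have "((\<lambda>z. U (z + s *\<^sub>R axis j 1) - U z) has_derivative
       (\<lambda>h. (\<Sum>k\<in>UNIV. h$k * G k (y + \<tau> *\<^sub>R axis i 1 + s *\<^sub>R axis j 1)) - (\<Sum>k\<in>UNIV. h$k * G k (y + \<tau> *\<^sub>R axis i 1))))
       (at (y + \<tau> *\<^sub>R axis i 1))"
      by (rule has_derivative_diff[OF shift_deriv[OF dU[OF a1]] dU[OF a2]])
    moreover have "(\<lambda>h. (\<Sum>k\<in>UNIV. h$k * G k (y + \<tau> *\<^sub>R axis i 1 + s *\<^sub>R axis j 1)) - (\<Sum>k\<in>UNIV. h$k * G k (y + \<tau> *\<^sub>R axis i 1)))
      = (\<lambda>h. \<Sum>k\<in>UNIV. h$k * D k (y + \<tau> *\<^sub>R axis i 1))"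
      by (simp add: D_def fun_eq_iff right_diff_distrib sum_subtractf)
    ultimately show "(F has_derivative (\<lambda>h. \<Sum>k\<in>UNIV. h$k * D k (y + \<tau> *\<^sub>R axis i 1))) (at (y + \<tau> *\<^sub>R axis i 1))"
      unfolding F_def[abs_def] by simp
  qed
  then obtain \<tau>1 where t1: "\<tau>1 \<in> {0..s}"
    and e1: "F (y + s *\<^sub>R axis i 1) - F y = s * D i (y + \<tau>1 *\<^sub>R axis i 1)" by blast
  have "\<exists>\<sigma>\<in>{0..s}. G i (y + \<tau>1 *\<^sub>R axis i 1 + s *\<^sub>R axis j 1) - G i (y + \<tau>1 *\<^sub>R axis i 1)
      = s * H i j (y + \<tau>1 *\<^sub>R axis i 1 + \<sigma> *\<^sub>R axis j 1)"
  proof (rule dir_mvt[OF s])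
    fix \<sigma> assume t: "\<sigma> \<in> {0..s}"
    show "(G i has_derivative (\<lambda>h. \<Sum>k\<in>UNIV. h $ k * H i k (y + \<tau>1 *\<^sub>R axis i 1 + \<sigma> *\<^sub>R axis j 1)))
      (at (y + \<tau>1 *\<^sub>R axis i 1 + \<sigma> *\<^sub>R axis j 1))"
      by (rule dG[OF inA[OF t1 t]])
  qed
  then obtain \<sigma>1 where t2: "\<sigma>1 \<in> {0..s}"
    and e2: "G i (y + \<tau>1 *\<^sub>R axis i 1 + s *\<^sub>R axis j 1) - G i (y + \<tau>1 *\<^sub>R axis i 1)
      = s * H i j (y + \<tau>1 *\<^sub>R axis i 1 + \<sigma>1 *\<^sub>R axis j 1)" by blast
  show ?thesis
  proof (intro exI conjI)
    show "dist (y + \<tau>1 *\<^sub>R axis i 1 + \<sigma>1 *\<^sub>R axis j 1) y \<le> 2 * s"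
      using norm2_le[of \<tau>1 i \<sigma>1 j] t1 t2 by (simp add: dist_norm)
    show "U (y + s *\<^sub>R axis i 1 + s *\<^sub>R axis j 1) - U (y + s *\<^sub>R axis i 1) - U (y + s *\<^sub>R axis j 1) + U y
      = s * s * H i j (y + \<tau>1 *\<^sub>R axis i 1 + \<sigma>1 *\<^sub>R axis j 1)"
      using e1 e2 by (simp add: F_def D_def algebra_simps)
  qed
qed

lemma schwarz:
  fixes U :: "real^'n \<Rightarrow> real" and G :: "'n \<Rightarrow> real^'n \<Rightarrow> real"
    and H :: "'n \<Rightarrow> 'n \<Rightarrow> real^'n \<Rightarrow> real"
  assumes "open A" "y \<in> A"
    and dU: "\<And>z. z \<in> A \<Longrightarrow> (U has_derivative (\<lambda>h. \<Sum>k\<in>UNIV. h$k * G k z)) (at z)"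
    and dG: "\<And>k z. z \<in> A \<Longrightarrow> (G k has_derivative (\<lambda>h. \<Sum>l\<in>UNIV. h$l * H k l z)) (at z)"
    and c1: "isCont (H i j) y" and c2: "isCont (H j i) y"
  shows "H i j y = H j i y"
proof (rule ccontr)
  assume ne: "H i j y \<noteq> H j i y"
  define \<epsilon> where "\<epsilon> = \<bar>H i j y - H j i y\<bar> / 3"
  have ep: "\<epsilon> > 0" using ne by (simp add: \<epsilon>_def)
  obtain d1 where d1: "d1 > 0" "\<And>z. dist z y < d1 \<Longrightarrow> dist (H i j z) (H i j y) < \<epsilon>"
    using c1 ep unfolding continuous_at_eps_delta by blast
  obtain d2 where d2: "d2 > 0" "\<And>z. dist z y < d2 \<Longrightarrow> dist (H j i z) (H j i y) < \<epsilon>"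
    using c2 ep unfolding continuous_at_eps_delta by blast
  obtain d0 where d0: "d0 > 0" "ball y d0 \<subseteq> A" using assms(1,2) open_contains_ball by blast
  define s where "s = min d0 (min d1 d2) / 3"
  have s: "s > 0" using d0 d1 d2 by (simp add: s_def)
  have sub: "cball y (2 * s) \<subseteq> A"
    using d0 s unfolding s_def by (auto simp: dist_commute)
  obtain p1 where p1: "dist p1 y \<le> 2 * s"
    "U (y + s *\<^sub>R axis i 1 + s *\<^sub>R axis j 1) - U (y + s *\<^sub>R axis i 1) - U (y + s *\<^sub>R axis j 1) + U y
      = s * s * H i j p1"
    using schwarz_half[OF dU dG sub, of i j] s by auto
  obtain p2 where p2: "dist p2 y \<le> 2 * s"
    "U (y + s *\<^sub>R axis j 1 + s *\<^sub>R axis i 1) - U (y + s *\<^sub>R axis j 1) - U (y + s *\<^sub>R axis i 1) + U y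
      = s * s * H j i p2"
    using schwarz_half[OF dU dG sub, of j i] s by auto
  have comm: "y + s *\<^sub>R axis j 1 + s *\<^sub>R axis i 1 = y + s *\<^sub>R axis i 1 + s *\<^sub>R axis j 1"
    by (simp add: algebra_simps)
  have "s * s * H i j p1 = s * s * H j i p2" using p1(2) p2(2)[unfolded comm] by linarith
  then have eq: "H i j p1 = H j i p2" using s by simp
  have "dist p1 y < d1" "dist p2 y < d2" using p1(1) p2(1) s unfolding s_def by auto
  then have "dist (H i j p1) (H i j y) < \<epsilon>" "dist (H j i p2) (H j i y) < \<epsilon>" using d1 d2 by auto
  then show False using eq ep unfolding \<epsilon>_def dist_real_def abs_real_def by (auto split: if_splits)
qed

lemma closure_ext:
  fixes f g :: "real^'n \<Rightarrow> real"
  assumes "continuous_on (closure S) f" "continuous_on (closure S) g"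
    "\<And>y. y \<in> S \<Longrightarrow> f y = g y" "x \<in> closure S"
  shows "f x = g x"
proof -
  have "continuous_on (closure S) (\<lambda>y. f y - g y)" using assms by (intro continuous_on_diff)
  from continuous_constant_on_closure[OF this, of 0] assms show ?thesis by auto
qed

lemma frac_lt:
  fixes r n :: real
  assumes "0 < r" "0 \<le> n"
  shows "r / (2 * (n + 1)) * n < r"
proof -
  have pos: "0 < 2 * (n + 1)" using assms(2) by simp
  have "r * n < r * (2 * (n + 1))"
    using assms by (intro mult_strict_left_mono) auto
  then show ?thesis using pos_divide_less_eq[OF pos] by (simp add: mult.commute)
qed

lemma small_zero:
  fixes a C :: real
  assumes "\<And>e. e > 0 \<Longrightarrow> \<bar>a\<bar> \<le> e * C" "C \<ge> 0"
  shows "a = 0"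
proof (rule ccontr)
  assume "a \<noteq> 0"
  moreover have "0 < 2 * (C + 1)" using assms(2) by simp
  ultimately have "\<bar>a\<bar> / (2 * (C + 1)) > 0" by (intro divide_pos_pos) auto
  then have "\<bar>a\<bar> \<le> (\<bar>a\<bar> / (2 * (C + 1))) * C" using assms(1) by blast
  moreover have "(\<bar>a\<bar> / (2 * (C + 1))) * C < \<bar>a\<bar>"
  proof -
    have pos: "0 < 2 * (C + 1)" using assms(2) by simp
    have "\<bar>a\<bar> * C < \<bar>a\<bar> * (2 * (C + 1))"
      using \<open>a \<noteq> 0\<close> assms(2) by (intro mult_strict_left_mono) auto
    then show ?thesis using pos_divide_less_eq[OF pos] by (simp add: mult.commute)
  qed
  ultimately show False by linarith
qed

lemma deriv_unique_closure:
  fixes f :: "real^'n \<Rightarrow> real"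
  assumes "open \<Omega>" "convex \<Omega>" "\<Omega> \<noteq> {}" "x \<in> closure \<Omega>"
    and d1: "(f has_derivative L1) (at x within closure \<Omega>)"
    and d2: "(f has_derivative L2) (at x within closure \<Omega>)"
  shows "L1 = L2"
proof -
  define L where "L h = L1 h - L2 h" for h
  have dL: "((\<lambda>y. f y - f y) has_derivative L) (at x within closure \<Omega>)"
    unfolding L_def[abs_def] by (rule has_derivative_diff[OF d1 d2])
  then have bl: "bounded_linear L" by (rule has_derivative_bounded_linear)
  then have lin: "linear L" by (rule bounded_linear.linear)
  from dL have est: "\<forall>e>0. \<exists>d>0. \<forall>y\<in>closure \<Omega>. norm (y - x) < d \<longrightarrow> \<bar>L (y - x)\<bar> \<le> e * norm (y - x)"
    unfolding has_derivative_within_alt by simp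
  have zq: "L (q - x) = 0" if q: "q \<in> closure \<Omega>" for q
  proof (rule small_zero[where C = "norm (q - x)"])
    fix e :: real assume e: "e > 0"
    obtain d where d: "d > 0" "\<forall>y\<in>closure \<Omega>. norm (y - x) < d \<longrightarrow> \<bar>L (y - x)\<bar> \<le> e * norm (y - x)"
      using est e by blast
    define \<tau> where "\<tau> = min 1 (d / (2 * (norm (q - x) + 1)))"
    have "0 < 2 * (norm (q - x) + 1)" by (simp add: add_nonneg_pos)
    then have "0 < d / (2 * (norm (q - x) + 1))"
      using d(1) by (intro divide_pos_pos) auto
    then have t0: "0 < \<tau>" "\<tau> \<le> 1" by (auto simp: \<tau>_def)
    have tl: "\<tau> * norm (q - x) < d"
    proof -
      have "\<tau> * norm (q - x) \<le> (d / (2 * (norm (q - x) + 1))) * norm (q - x)"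
        by (rule mult_right_mono) (auto simp: \<tau>_def)
      also have "\<dots> < d"
      proof -
        have pos: "0 < 2 * (norm (q - x) + 1)" by (simp add: add_nonneg_pos)
        have "d * norm (q - x) < d * (2 * (norm (q - x) + 1))"
          using d(1) by (intro mult_strict_left_mono) (auto intro: add_nonneg_pos)
        then show ?thesis using pos_divide_less_eq[OF pos] by (simp add: mult.commute)
      qed
      finally show ?thesis .
    qed
    define y where "y = x + \<tau> *\<^sub>R (q - x)"
    have "y = (1 - \<tau>) *\<^sub>R x + \<tau> *\<^sub>R q" by (simp add: y_def algebra_simps)
    then have yin: "y \<in> closure \<Omega>"
      using convex_closure[OF assms(2)] assms(4) q t0 unfolding convex_def by auto
    have "norm (y - x) = \<tau> * norm (q - x)" using t0 by (simp add: y_def)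
    then have "\<bar>L (y - x)\<bar> \<le> e * (\<tau> * norm (q - x))" using d(2) yin tl by auto
    moreover have "L (y - x) = \<tau> * L (q - x)" using lin by (simp add: y_def linear_scale)
    ultimately have "\<tau> * \<bar>L (q - x)\<bar> \<le> \<tau> * (e * norm (q - x))"
      using t0 by (simp add: abs_mult)
    then show "\<bar>L (q - x)\<bar> \<le> e * norm (q - x)" using t0 by simp
  qed simp
  obtain p where p: "p \<in> \<Omega>" using assms(3) by blast
  obtain r where r: "r > 0" "ball p r \<subseteq> \<Omega>" using assms(1) p open_contains_ball by blast
  have "L w = 0" for w
  proof -
    define c where "c = r / (2 * (norm w + 1))"
    have "0 < 2 * (norm w + 1)" by (simp add: add_nonneg_pos)
    then have c: "c > 0" using r unfolding c_def by (intro divide_pos_pos)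
    have "norm (c *\<^sub>R w) < r"
    proof -
      have "norm (c *\<^sub>R w) = c * norm w" using c by simp
      also have "\<dots> < r" using frac_lt[OF r(1) norm_ge_zero[of w]] by (simp add: c_def)
      finally show ?thesis .
    qed
    then have "p + c *\<^sub>R w \<in> \<Omega>" using r by (auto simp: dist_norm)
    then have "L (p + c *\<^sub>R w - x) = 0" using zq closure_subset by blast
    moreover have "L (p - x) = 0" using zq closure_subset p by blast
    moreover have "L (p + c *\<^sub>R w - x) = L (p - x) + c * L w"
    proof -
      have e: "p + c *\<^sub>R w - x = (p - x) + c *\<^sub>R w" by (simp add: algebra_simps)
      have "L ((p - x) + c *\<^sub>R w) = L (p - x) + c * L w"
        using linear_add[OF lin] linear_scale[OF lin] by simp
      then show ?thesis unfolding e .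
    qed
    ultimately show ?thesis using c by simp
  qed
  then show ?thesis unfolding L_def fun_eq_iff by simp
qed

lemma tangential:
  fixes \<rho> g :: "real^'n \<Rightarrow> real" and P h x :: "real^'n"
  assumes d\<rho>: "(\<rho> has_derivative (\<lambda>y. P \<bullet> y)) (at x)" and \<rho>x: "\<rho> x = 0" and P: "P \<noteq> 0"
    and Ph: "P \<bullet> h = 0"
    and c\<rho>: "continuous_on UNIV \<rho>"
    and dg: "(g has_derivative L) (at x within S)"
    and zero: "\<And>z. \<rho> z = 0 \<Longrightarrow> z \<in> S \<and> g z = 0"
  shows "L h = 0"
proof (rule ccontr)
  assume Lh: "L h \<noteq> 0"
  have gx: "g x = 0" using zero \<rho>x by blast
  have lin: "linear L" using dg by (rule has_derivative_linear)
  define a where "a = \<bar>L h\<bar>"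
  have a: "a > 0" using Lh by (simp add: a_def)
  define M where "M = \<bar>L P\<bar>"
  define nP where "nP = norm P"
  have nP: "nP > 0" using P by (simp add: nP_def)
  define \<epsilon> where "\<epsilon> = a / (4 * (M + 1))"
  have ep: "\<epsilon> > 0" unfolding \<epsilon>_def using a by (intro divide_pos_pos) (auto simp: M_def add_nonneg_pos)
  have epM: "\<epsilon> * M \<le> a / 4"
  proof -
    have "\<epsilon> * M \<le> \<epsilon> * (M + 1)" using ep by simp
    also have "\<dots> = a / 4"
    proof -
      have Mp: "M + 1 > 0" by (simp add: M_def add_nonneg_pos)
      then show ?thesis unfolding \<epsilon>_def by (simp add: field_simps)
    qed
    finally show ?thesis .
  qed
  define R where "R = norm h + \<epsilon> * nP + 1"
  have R: "R > 0" unfolding R_def using ep nP by (simp add: add_nonneg_pos)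
  define \<eta> where "\<eta> = a / (4 * R)"
  have eta: "\<eta> > 0" unfolding \<eta>_def using a R by simp
  define \<mu> where "\<mu> = \<epsilon> * nP\<^sup>2 / (2 * R)"
  have mu: "\<mu> > 0" unfolding \<mu>_def using ep R nP by simp
  obtain d1 where d1: "d1 > 0" "\<forall>y\<in>S. norm (y - x) < d1 \<longrightarrow> norm (g y - g x - L (y - x)) \<le> \<eta> * norm (y - x)"
    using dg eta unfolding has_derivative_within_alt by blast
  obtain d2 where d2: "d2 > 0" "\<forall>y\<in>UNIV. norm (y - x) < d2 \<longrightarrow> norm (\<rho> y - \<rho> x - P \<bullet> (y - x)) \<le> \<mu> * norm (y - x)"
    using d\<rho> mu unfolding has_derivative_within_alt by blast
  define s where "s = min d1 d2 / (2 * R)"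
  have s: "s > 0" unfolding s_def using d1 d2 R by simp
  have sR: "s * R < d1" "s * R < d2"
    unfolding s_def using d1 d2 R by (auto simp: field_simps)
  define y where "y r = x + s *\<^sub>R h + r *\<^sub>R P" for r
  have ny: "norm (y r - x) < s * R" if r: "\<bar>r\<bar> \<le> \<epsilon> * s" for r
  proof -
    have "norm (y r - x) \<le> s * norm h + \<bar>r\<bar> * nP"
      using norm_triangle_ineq[of "s *\<^sub>R h" "r *\<^sub>R P"] s by (simp add: y_def nP_def)
    also have "\<dots> \<le> s * norm h + (\<epsilon> * s) * nP" using r nP by (simp add: mult_right_mono)
    also have "\<dots> < s * R" using s by (simp add: R_def algebra_simps)
    finally show ?thesis .
  qed
  have Py: "P \<bullet> (y r - x) = r * nP\<^sup>2" for r
    using Ph by (simp add: y_def inner_add_right nP_def power2_norm_eq_inner)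
  have \<rho>est: "\<bar>\<rho> (y r) - r * nP\<^sup>2\<bar> \<le> s * \<epsilon> * nP\<^sup>2 / 2" if r: "\<bar>r\<bar> \<le> \<epsilon> * s" for r
  proof -
    have "norm (y r - x) < d2" using ny[OF r] sR by linarith
    then have "\<bar>\<rho> (y r) - \<rho> x - P \<bullet> (y r - x)\<bar> \<le> \<mu> * norm (y r - x)"
      using d2(2) by auto
    then have "\<bar>\<rho> (y r) - r * nP\<^sup>2\<bar> \<le> \<mu> * norm (y r - x)" using Py[of r] \<rho>x by simp
    also have "\<dots> \<le> \<mu> * (s * R)" using ny[OF r] mu by simp
    also have "\<dots> = s * \<epsilon> * nP\<^sup>2 / 2" unfolding \<mu>_def using R by simp
    finally show ?thesis .
  qed
  have lo: "\<rho> (y (- (\<epsilon> * s))) \<le> 0"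
  proof -
    have "\<bar>- (\<epsilon> * s)\<bar> \<le> \<epsilon> * s" using ep s by simp
    from \<rho>est[OF this] have "\<rho> (y (- (\<epsilon> * s))) \<le> - (\<epsilon> * s) * nP\<^sup>2 + s * \<epsilon> * nP\<^sup>2 / 2" by linarith
    moreover have "0 \<le> s * \<epsilon> * nP\<^sup>2" using s ep by simp
    ultimately show ?thesis by (simp add: algebra_simps)
  qed
  have hi: "0 \<le> \<rho> (y (\<epsilon> * s))"
  proof -
    have "\<bar>\<epsilon> * s\<bar> \<le> \<epsilon> * s" using ep s by simp
    from \<rho>est[OF this] have "(\<epsilon> * s) * nP\<^sup>2 - s * \<epsilon> * nP\<^sup>2 / 2 \<le> \<rho> (y (\<epsilon> * s))" by linarith
    moreover have "0 \<le> s * \<epsilon> * nP\<^sup>2" using s ep by simp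
    ultimately show ?thesis by (simp add: algebra_simps)
  qed
  have cont: "continuous_on {- (\<epsilon> * s) .. \<epsilon> * s} (\<lambda>r. \<rho> (y r))"
    unfolding y_def
    by (rule continuous_on_compose2[OF c\<rho>]) (auto intro!: continuous_intros)
  obtain r0 where r0: "- (\<epsilon> * s) \<le> r0" "r0 \<le> \<epsilon> * s" "\<rho> (y r0) = 0"
    using IVT'[of "\<lambda>r. \<rho> (y r)", OF lo hi _ cont] ep s by auto
  have r0a: "\<bar>r0\<bar> \<le> \<epsilon> * s" using r0 by auto
  from zero[OF r0(3)] have zS: "y r0 \<in> S" and gz: "g (y r0) = 0" by auto
  have "\<bar>L (y r0 - x)\<bar> \<le> \<eta> * norm (y r0 - x)"
    using d1(2) zS ny[OF r0a] sR gz gx by force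
  also have "\<dots> \<le> \<eta> * (s * R)" using ny[OF r0a] eta by simp
  also have "\<dots> = s * a / 4" unfolding \<eta>_def using R by simp
  finally have e1: "\<bar>L (y r0 - x)\<bar> \<le> s * a / 4" .
  have "L (y r0 - x) = s * L h + r0 * L P"
    using lin by (simp add: y_def linear_add linear_scale)
  then have "\<bar>s * L h\<bar> \<le> \<bar>L (y r0 - x)\<bar> + \<bar>r0\<bar> * M"
    by (simp add: M_def abs_mult[symmetric])
  also have "\<bar>r0\<bar> * M \<le> (\<epsilon> * s) * M" using r0a by (simp add: M_def mult_right_mono)
  then have "\<bar>L (y r0 - x)\<bar> + \<bar>r0\<bar> * M \<le> s * a / 4 + s * (\<epsilon> * M)" using e1 by (simp add: algebra_simps)
  also have "s * (\<epsilon> * M) \<le> s * (a / 4)" using epM s by simp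
  finally have "s * a \<le> s * a / 4 + s * (a / 4)" using s by (simp add: a_def abs_mult)
  then show False using s a by (simp add: field_simps)
qed

lemma mvt_glob:
  fixes f f' :: "real \<Rightarrow> real"
  assumes "a < b" "\<And>\<tau>. DERIV f \<tau> :> f' \<tau>"
  shows "\<exists>z. a < z \<and> z < b \<and> f b - f a = (b - a) * f' z"
proof -
  have "continuous_on {a..b} f"
    by (rule DERIV_atLeastAtMost_imp_continuous_on) (use assms(2) in blast)
  moreover have "f differentiable (at x)" for x
    using assms(2) real_differentiable_def by blast
  ultimately obtain l z where "a < z" "z < b" "DERIV f z :> l" "f b - f a = (b - a) * l"
    using MVT[OF assms(1)] by blast
  then show ?thesis using DERIV_unique[OF assms(2)[of z]] by blast
qed

lemma line_deriv:
  fixes F :: "real^'n \<Rightarrow> real" and D :: "'n \<Rightarrow> real^'n \<Rightarrow> real"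
  assumes "(F has_derivative (\<lambda>v. \<Sum>k\<in>UNIV. v$k * D k (x + \<tau> *\<^sub>R h))) (at (x + \<tau> *\<^sub>R h))"
  shows "DERIV (\<lambda>\<tau>. F (x + \<tau> *\<^sub>R h)) \<tau> :> (\<Sum>k\<in>UNIV. h$k * D k (x + \<tau> *\<^sub>R h))"
proof -
  have f: "((\<lambda>\<tau>. x + \<tau> *\<^sub>R h) has_derivative (\<lambda>d. d *\<^sub>R h)) (at \<tau>)"
    by (auto intro!: derivative_eq_intros)
  have "((\<lambda>\<tau>. F (x + \<tau> *\<^sub>R h)) has_derivative (\<lambda>d. \<Sum>k\<in>UNIV. (d *\<^sub>R h)$k * D k (x + \<tau> *\<^sub>R h))) (at \<tau>)"
    using has_derivative_compose[OF f assms] by simp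
  then show ?thesis
    by (rule has_derivative_imp_has_field_derivative) (simp add: sum_distrib_left algebra_simps)
qed

lemma convex_hess:
  fixes \<rho> :: "real^'n \<Rightarrow> real" and Pk :: "'n \<Rightarrow> real^'n \<Rightarrow> real" and Q :: "'n \<Rightarrow> 'n \<Rightarrow> real^'n \<Rightarrow> real"
  assumes cvx: "convex \<Omega>" and \<Omega>: "\<Omega> = {x. \<rho> x < 0}" and \<rho>x: "\<rho> x = 0"
    and d\<rho>: "\<And>z. (\<rho> has_derivative (\<lambda>v. \<Sum>k\<in>UNIV. v$k * Pk k z)) (at z)"
    and dP: "\<And>k z. (Pk k has_derivative (\<lambda>v. \<Sum>l\<in>UNIV. v$l * Q k l z)) (at z)"
    and cQ: "\<And>k l. continuous_on UNIV (Q k l)"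
    and tang: "(\<Sum>k\<in>UNIV. h$k * Pk k x) = 0"
  shows "(\<Sum>k\<in>UNIV. h$k * (\<Sum>l\<in>UNIV. h$l * Q k l x)) \<ge> 0"
proof (rule ccontr)
  define \<phi> where "\<phi> \<tau> = \<rho> (x + \<tau> *\<^sub>R h)" for \<tau>
  define \<psi> where "\<psi> \<tau> = (\<Sum>k\<in>UNIV. h$k * Pk k (x + \<tau> *\<^sub>R h))" for \<tau>
  define q where "q \<tau> = (\<Sum>k\<in>UNIV. h$k * (\<Sum>l\<in>UNIV. h$l * Q k l (x + \<tau> *\<^sub>R h)))" for \<tau>
  have d\<phi>: "DERIV \<phi> \<tau> :> \<psi> \<tau>" for \<tau>
    unfolding \<phi>_def[abs_def] \<psi>_def by (rule line_deriv[where F=\<rho> and D=Pk and x=x and \<tau>=\<tau> and h=h, OF d\<rho>])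
  have d\<psi>: "DERIV \<psi> \<tau> :> q \<tau>" for \<tau>
  proof -
    have "DERIV (\<lambda>\<tau>. Pk k (x + \<tau> *\<^sub>R h)) \<tau> :> (\<Sum>l\<in>UNIV. h$l * Q k l (x + \<tau> *\<^sub>R h))" for k
      by (rule line_deriv[where F="Pk k" and D="Q k" and x=x and \<tau>=\<tau> and h=h, OF dP])
    then have "DERIV (\<lambda>\<tau>. \<Sum>k\<in>UNIV. h$k * Pk k (x + \<tau> *\<^sub>R h)) \<tau> :> (\<Sum>k\<in>UNIV. h$k * (\<Sum>l\<in>UNIV. h$l * Q k l (x + \<tau> *\<^sub>R h)))"
      by (auto intro!: DERIV_sum DERIV_cmult)
    then show ?thesis unfolding \<psi>_def[abs_def] q_def .
  qed
  have cq: "continuous_on UNIV q"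
    unfolding q_def[abs_def]
    by (intro continuous_intros continuous_on_compose2[OF cQ]) auto
  assume "\<not> ?thesis"
  then have q0: "q 0 < 0" unfolding q_def by simp
  have "isCont q 0" using cq by (simp add: continuous_on_eq_continuous_at)
  then obtain \<delta> where \<delta>: "\<delta> > 0" "\<And>\<tau>. dist \<tau> 0 < \<delta> \<Longrightarrow> dist (q \<tau>) (q 0) < - q 0"
    using q0 unfolding continuous_at_eps_delta by (metis neg_0_less_iff_less)
  have qneg: "q \<tau> < 0" if "\<bar>\<tau>\<bar> < \<delta>" for \<tau>
    using \<delta>(2)[of \<tau>] that by (auto simp: dist_real_def)
  have \<psi>0: "\<psi> 0 = 0" using tang by (simp add: \<psi>_def)
  have \<psi>pos: "\<psi> \<tau> < 0" if "0 < \<tau>" "\<tau> < \<delta>" for \<tau>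
  proof -
    have "\<psi> \<tau> < \<psi> 0"
    proof (rule DERIV_neg_imp_decreasing[OF that(1)])
      fix t :: real assume "0 \<le> t" "t \<le> \<tau>"
      then have "\<bar>t\<bar> < \<delta>" using that by auto
      then show "\<exists>y. DERIV \<psi> t :> y \<and> y < 0" using d\<psi>[of t] qneg by blast
    qed
    then show ?thesis using \<psi>0 by simp
  qed
  have \<psi>neg: "\<psi> \<tau> > 0" if "- \<delta> < \<tau>" "\<tau> < 0" for \<tau>
  proof -
    have "\<psi> \<tau> > \<psi> 0"
    proof (rule DERIV_neg_imp_decreasing[OF that(2)])
      fix t :: real assume "\<tau> \<le> t" "t \<le> 0"
      then have "\<bar>t\<bar> < \<delta>" using that by auto
      then show "\<exists>y. DERIV \<psi> t :> y \<and> y < 0" using d\<psi>[of t] qneg by blast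
    qed
    then show ?thesis using \<psi>0 by simp
  qed
  define s where "s = \<delta> / 2"
  have s: "0 < s" "s < \<delta>" using \<delta> by (auto simp: s_def)
  obtain z1 where z1: "0 < z1" "z1 < s" "\<phi> s - \<phi> 0 = (s - 0) * \<psi> z1"
    using mvt_glob[OF s(1) d\<phi>] by blast
  have "\<phi> s < 0"
    using z1 \<psi>pos[of z1] s \<rho>x by (simp add: \<phi>_def mult_pos_neg)
  obtain z2 where z2: "- s < z2" "z2 < 0" "\<phi> 0 - \<phi> (- s) = (0 - (- s)) * \<psi> z2"
    using mvt_glob[of "- s" 0, OF _ d\<phi>] s by auto
  have "\<phi> (- s) < 0"
  proof -
    have "\<psi> z2 > 0" using z2 s by (intro \<psi>neg) auto
    then have "0 < s * \<psi> z2" using s by simp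
    then show ?thesis using z2 \<rho>x by (simp add: \<phi>_def)
  qed
  have "x + s *\<^sub>R h \<in> \<Omega>" "x + (- s) *\<^sub>R h \<in> \<Omega>"
    using \<open>\<phi> s < 0\<close> \<open>\<phi> (- s) < 0\<close> by (auto simp: \<Omega> \<phi>_def)
  then have "(1/2) *\<^sub>R (x + s *\<^sub>R h) + (1/2) *\<^sub>R (x + (- s) *\<^sub>R h) \<in> \<Omega>"
    using convexD[OF cvx] by simp
  moreover have "(1/2) *\<^sub>R (x + s *\<^sub>R h) + (1/2) *\<^sub>R (x + (- s) *\<^sub>R h) = x"
    by (simp add: algebra_simps scaleR_left_distrib[symmetric])
  ultimately show False using \<rho>x \<Omega> by auto
qed

lemma gradw_expand:
  assumes "g differentiable (at y within S)"
  shows "(g has_derivative (\<lambda>v. \<Sum>k\<in>UNIV. v$k * gradw S g y $ k)) (at y within S)"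
proof -
  have d: "(g has_derivative frechet_derivative g (at y within S)) (at y within S)"
    using assms frechet_derivative_works by blast
  have "linear (frechet_derivative g (at y within S))"
    using d has_derivative_linear by blast
  then have "frechet_derivative g (at y within S) = (\<lambda>v. \<Sum>k\<in>UNIV. v$k * gradw S g y $ k)"
    by (auto simp: fun_eq_iff gradw_def intro: lin_expand)
  then show ?thesis using d by simp
qed

lemma gradw_inner:
  assumes "g differentiable (at y within S)"
  shows "gradw S g y \<bullet> w = frechet_derivative g (at y within S) w"
proof -
  have d: "(g has_derivative frechet_derivative g (at y within S)) (at y within S)"
    using assms frechet_derivative_works by blast
  have "linear (frechet_derivative g (at y within S))"
    using d has_derivative_linear by blast
  from lin_expand[OF this, of w] show ?thesis
    by (simp add: inner_vec_def gradw_def mult.commute)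
qed

theorem mainTheorem4:
  fixes \<Omega> :: "(real^'n) set"
    and \<rho> :: "real^'n \<Rightarrow> real"
    and \<nu> :: "real^'n \<Rightarrow> real^'n"
    and f :: "real^'n \<Rightarrow> real \<Rightarrow> real \<Rightarrow> (real^'n) \<times> real"
    and u :: "real^'n \<Rightarrow> real \<Rightarrow> real"
  assumes dom: "open \<Omega>" "connected \<Omega>" "\<Omega> \<noteq> {}" "bounded \<Omega>" "convex \<Omega>"
    and smooth_bdry: "smooth_fun \<rho>" "\<Omega> = {x. \<rho> x < 0}"
      "\<forall>x. \<rho> x = 0 \<longrightarrow> gradw UNIV \<rho> x \<noteq> 0"
    and normal: "\<forall>x\<in>frontier \<Omega>. \<nu> x = (1 / norm (gradw UNIV \<rho> x)) *\<^sub>R gradw UNIV \<rho> x"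
    and C2: "\<forall>t>0. C2_upto (closure \<Omega>) (\<lambda>y. u y t)"
    and time_diff: "\<forall>x\<in>\<Omega>. \<forall>t>0. (\<lambda>s. u x s) differentiable (at t)"
    and pde: "\<forall>x\<in>\<Omega>. \<forall>t>0.
       (let du = (\<lambda>y. gradw (closure \<Omega>) (\<lambda>z. u z t) y);
            W = (\<lambda>y. sqrt (1 + (norm (du y))\<^sup>2));
            nvec = ((- 1 / W x) *\<^sub>R du x, 1 / W x)
        in deriv (\<lambda>s. u x s) t / W x
             = divw (closure \<Omega>) (\<lambda>y. (1 / W y) *\<^sub>R du y) x + f x (u x t) t \<bullet> nvec)"
    and neumann: "\<forall>x\<in>frontier \<Omega>. \<forall>t>0. gradw (closure \<Omega>) (\<lambda>z. u z t) x \<bullet> \<nu> x = 0"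
  shows "\<forall>t>0. \<forall>x\<in>frontier \<Omega>.
     (let du = gradw (closure \<Omega>) (\<lambda>z. u z t) x;
          W = sqrt (1 + (norm du)\<^sup>2);
          v = (\<lambda>y. sqrt (1 + (norm (gradw (closure \<Omega>) (\<lambda>z. u z t) y))\<^sup>2));
          nvec = ((- 1 / W) *\<^sub>R du, 1 / W) :: (real^'n) \<times> real;
          Dv = (gradw (closure \<Omega>) v x, 0) :: (real^'n) \<times> real;
          DGv = Dv - (Dv \<bullet> nvec) *\<^sub>R nvec
      in DGv \<bullet> (\<nu> x, 0) \<le> 0)"

proof (intro allI impI ballI)
  fix t :: real and x assume t: "t > 0" and xf: "x \<in> frontier \<Omega>"
  define S where "S = closure \<Omega>"
  define U where "U z = u z t" for z
  define G where "G = gradw S U"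
  define H where "H k l y = gradw S (\<lambda>w. G w $ k) y $ l" for k l y
  define Pk where "Pk k z = frechet_derivative \<rho> (at z) (axis k 1)" for k z
  define Q where "Q k l z = frechet_derivative (Pk k) (at z) (axis l 1)" for k l z
  define P where "P z = gradw UNIV \<rho> z" for z
  have PPk: "P z $ k = Pk k z" for z k by (simp add: P_def Pk_def gradw_def)
  have opn: "open \<Omega>" and cvx: "convex \<Omega>" and ne: "\<Omega> \<noteq> {}" using dom by auto
  have \<Omega>S: "\<Omega> \<subseteq> S" by (simp add: S_def closure_subset)
  have \<Omega>int: "\<Omega> \<subseteq> interior S" using \<Omega>S opn by (simp add: interior_maximal)
  have xS: "x \<in> S" using xf by (simp add: S_def frontier_def)
  have fr: "frontier \<Omega> = S - \<Omega>" using opn by (simp add: S_def frontier_def interior_open)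
  have C2t: "C2_upto S U" using C2 t by (simp add: S_def U_def[abs_def])
  have cU: "\<And>y. y \<in> S \<Longrightarrow> U differentiable (at y within S)"
    using C2t by (simp add: C2_upto_def)
  have cG: "\<And>k y. y \<in> S \<Longrightarrow> (\<lambda>w. G w $ k) differentiable (at y within S)"
    using C2t by (simp add: C2_upto_def G_def)
  have cH: "\<And>k l. continuous_on S (H k l)"
    using C2t by (simp add: C2_upto_def G_def H_def[abs_def])
  have dUw: "(U has_derivative (\<lambda>v. \<Sum>k\<in>UNIV. v$k * G y $ k)) (at y within S)" if "y \<in> S" for y
    using gradw_expand[OF cU[OF that]] by (simp add: G_def)
  have dGw: "((\<lambda>w. G w $ k) has_derivative (\<lambda>v. \<Sum>l\<in>UNIV. v$l * H k l y)) (at y within S)" if "y \<in> S" for k y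
    using gradw_expand[OF cG[OF that]] by (simp add: H_def)
  have sym\<Omega>: "H k l y = H l k y" if y: "y \<in> \<Omega>" for k l y
  proof (rule schwarz[where U=U and G="\<lambda>k w. G w $ k" and H=H, OF opn y])
    fix z assume z: "z \<in> \<Omega>"
    have "z \<in> interior S" using \<Omega>int z by blast
    then have atz: "at z within S = at z" by (rule at_within_interior)
    have zS: "z \<in> S" using \<Omega>S z by blast
    show "(U has_derivative (\<lambda>v. \<Sum>k\<in>UNIV. v$k * G z $ k)) (at z)"
      using dUw[OF zS] atz by simp
    fix k
    show "((\<lambda>w. G w $ k) has_derivative (\<lambda>v. \<Sum>l\<in>UNIV. v$l * H k l z)) (at z)"
      using dGw[OF zS, of k] atz by simp
  next
    have "continuous_on \<Omega> (H k l)" "continuous_on \<Omega> (H l k)"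
      using continuous_on_subset[OF cH \<Omega>S] by blast+
    then show "isCont (H k l) y" "isCont (H l k) y"
      using opn y by (auto simp: continuous_on_eq_continuous_at)
  qed
  have symx: "H k l x = H l k x" for k l
  proof (rule closure_ext[of \<Omega> "H k l" "H l k"])
    show "continuous_on (closure \<Omega>) (H k l)" "continuous_on (closure \<Omega>) (H l k)"
      using cH unfolding S_def by blast+
    show "\<And>y. y \<in> \<Omega> \<Longrightarrow> H k l y = H l k y" by (rule sym\<Omega>)
    show "x \<in> closure \<Omega>" using xS unfolding S_def .
  qed
  have Ck2: "Ck (Suc (Suc 0)) \<rho>" and Ck0: "Ck 0 \<rho>" using smooth_bdry(1) by (auto simp: smooth_fun_def)
  have c\<rho>: "continuous_on UNIV \<rho>" using Ck0 by simp
  have \<rho>diff: "\<And>z. \<rho> differentiable (at z)" using Ck2 by simp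
  have Pdiff: "\<And>k z. Pk k differentiable (at z)" using Ck2 by (simp add: Pk_def[abs_def])
  have cQ: "\<And>k l. continuous_on UNIV (Q k l)" using Ck2 by (simp add: Q_def[abs_def] Pk_def[abs_def])
  have d\<rho>: "(\<rho> has_derivative (\<lambda>v. \<Sum>k\<in>UNIV. v$k * Pk k z)) (at z)" for z
    using gradw_expand[OF \<rho>diff[of z]] by (simp add: PPk[symmetric] P_def)
  have dP: "(Pk k has_derivative (\<lambda>v. \<Sum>l\<in>UNIV. v$l * Q k l z)) (at z)" for k z
    using gradw_expand[OF Pdiff[of k z]] by (simp add: Q_def gradw_def)
  have Pinner: "(\<Sum>k\<in>UNIV. v$k * Pk k z) = P z \<bullet> v" for v z
    by (simp add: inner_vec_def PPk mult.commute)
  have fr0: "\<rho> z = 0" if z: "z \<in> frontier \<Omega>" for z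
  proof -
    have "closed {y. \<rho> y \<le> 0}" using c\<rho> by (simp add: closed_Collect_le)
    then have "closure \<Omega> \<subseteq> {y. \<rho> y \<le> 0}"
      using smooth_bdry(2) by (intro closure_minimal) auto
    then have "\<rho> z \<le> 0" using z fr by (auto simp: S_def)
    moreover have "z \<notin> \<Omega>" using z fr by auto
    ultimately show ?thesis using smooth_bdry(2) by auto
  qed
  have fr1: "z \<in> frontier \<Omega>" if z: "\<rho> z = 0" for z
  proof -
    have Pz: "P z \<noteq> 0" using smooth_bdry(3) z by (simp add: P_def)
    have D0: "DERIV (\<lambda>\<tau>. \<rho> (z + \<tau> *\<^sub>R (- P z))) 0 :> (\<Sum>k\<in>UNIV. (- P z)$k * Pk k (z + 0 *\<^sub>R (- P z)))"
      by (rule line_deriv[where F=\<rho> and D=Pk, OF d\<rho>])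
    have "(\<Sum>k\<in>UNIV. (- P z)$k * Pk k (z + 0 *\<^sub>R (- P z))) = - (P z \<bullet> P z)"
      using Pinner[of "- P z" z] by simp
    with D0 have D: "DERIV (\<lambda>\<tau>. \<rho> (z + \<tau> *\<^sub>R (- P z))) 0 :> - (P z \<bullet> P z)" by simp
    have neg: "- (P z \<bullet> P z) < 0" using Pz by simp
    obtain d where d: "d > 0" and dd: "\<forall>h>0. h < d \<longrightarrow> \<rho> (z + (0 + h) *\<^sub>R (- P z)) < \<rho> (z + 0 *\<^sub>R (- P z))"
      using DERIV_neg_dec_right[OF D neg] by blast
    have nP: "norm (P z) > 0" using Pz by simp
    have "z \<in> closure \<Omega>"
      unfolding closure_approachable
    proof (intro allI impI)
      fix e :: real assume e: "e > 0"
      define h where "h = min (d / 2) (e / (2 * norm (P z)))"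
      have hpos2: "e / (2 * norm (P z)) > 0" using e nP by simp
      have h: "h > 0" "h < d" using d hpos2 unfolding h_def by auto
      have "\<rho> (z + h *\<^sub>R (- P z)) < 0" using dd h z by simp
      then have "z + h *\<^sub>R (- P z) \<in> \<Omega>" using smooth_bdry(2) by simp
      moreover have "dist (z + h *\<^sub>R (- P z)) z < e"
      proof -
        have "dist (z + h *\<^sub>R (- P z)) z = h * norm (P z)" using h by (simp add: dist_norm)
        also have "\<dots> \<le> (e / (2 * norm (P z))) * norm (P z)"
          by (rule mult_right_mono) (auto simp: h_def)
        also have "\<dots> < e" using e nP by simp
        finally show ?thesis .
      qed
      ultimately show "\<exists>y\<in>\<Omega>. dist y z < e" by blast
    qed
    moreover have "z \<notin> \<Omega>" using z smooth_bdry(2) by simp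
    ultimately show ?thesis using fr by (simp add: S_def)
  qed
  have GP0: "G z \<bullet> P z = 0" if z: "z \<in> frontier \<Omega>" for z
  proof -
    have Pz: "P z \<noteq> 0" using smooth_bdry(3) fr0[OF z] by (simp add: P_def)
    have "G z \<bullet> \<nu> z = 0" using neumann z t by (simp add: G_def S_def U_def[abs_def])
    then have "(1 / norm (P z)) * (G z \<bullet> P z) = 0" using normal z by (simp add: P_def)
    then show ?thesis using Pz by simp
  qed
  \<comment> \<open>tangential derivative of G . P\<close>
  define g where "g y = (\<Sum>k\<in>UNIV. G y $ k * Pk k y)" for y
  define Lg where "Lg v = (\<Sum>k\<in>UNIV. (\<Sum>l\<in>UNIV. v$l * H k l x) * Pk k x + G x $ k * (\<Sum>l\<in>UNIV. v$l * Q k l x))" for v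
  have dk: "((\<lambda>y. G y $ k * Pk k y) has_derivative
      (\<lambda>v. G x $ k * (\<Sum>l\<in>UNIV. v$l * Q k l x) + (\<Sum>l\<in>UNIV. v$l * H k l x) * Pk k x)) (at x within S)" for k
    by (rule has_derivative_mult[OF dGw[OF xS] has_derivative_at_withinI[OF dP]])
  have dg0: "(g has_derivative (\<lambda>v. \<Sum>k\<in>UNIV. G x $ k * (\<Sum>l\<in>UNIV. v$l * Q k l x) + (\<Sum>l\<in>UNIV. v$l * H k l x) * Pk k x)) (at x within S)"
    unfolding g_def[abs_def] by (rule has_derivative_sum) (rule dk)
  have "(\<lambda>v. \<Sum>k\<in>UNIV. G x $ k * (\<Sum>l\<in>UNIV. v$l * Q k l x) + (\<Sum>l\<in>UNIV. v$l * H k l x) * Pk k x) = Lg"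
    by (simp add: Lg_def fun_eq_iff add.commute)
  with dg0 have dg: "(g has_derivative Lg) (at x within S)" by simp
  have gz: "z \<in> S \<and> g z = 0" if "\<rho> z = 0" for z
    using fr1[OF that] GP0[OF fr1[OF that]] fr
    by (auto simp: g_def inner_vec_def PPk mult.commute)
  have \<rho>x: "\<rho> x = 0" using fr0[OF xf] .
  have Px: "P x \<noteq> 0" using smooth_bdry(3) \<rho>x by (simp add: P_def)
  have PG: "P x \<bullet> G x = 0" using GP0[OF xf] by (simp add: inner_commute)
  have d\<rho>x: "(\<rho> has_derivative (\<lambda>v. P x \<bullet> v)) (at x)"
    using d\<rho>[of x] by (simp add: Pinner)
  have Lg0: "Lg (G x) = 0"
    by (rule tangential[OF d\<rho>x \<rho>x Px PG c\<rho> dg gz])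
  have tang: "(\<Sum>k\<in>UNIV. G x $ k * Pk k x) = 0"
    using PG Pinner[of "G x" x] by simp
  have hess: "(\<Sum>k\<in>UNIV. G x $ k * (\<Sum>l\<in>UNIV. G x $ l * Q k l x)) \<ge> 0"
    by (rule convex_hess[OF cvx smooth_bdry(2) \<rho>x d\<rho> dP cQ tang])
  define A where "A = (\<Sum>k\<in>UNIV. (\<Sum>l\<in>UNIV. G x $ l * H k l x) * Pk k x)"
  have A: "A \<le> 0"
  proof -
    have "Lg (G x) = A + (\<Sum>k\<in>UNIV. G x $ k * (\<Sum>l\<in>UNIV. G x $ l * Q k l x))"
      by (simp add: Lg_def A_def sum.distrib)
    then show ?thesis using Lg0 hess by linarith
  qed
  define g2 where "g2 y = 1 + (\<Sum>k\<in>UNIV. G y $ k * G y $ k)" for y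
  have nG: "(norm (G y))\<^sup>2 = (\<Sum>k\<in>UNIV. G y $ k * G y $ k)" for y
    by (simp add: power2_norm_eq_inner inner_vec_def)
  define V where "V = (\<lambda>y. sqrt (1 + (norm (G y))\<^sup>2))"
  have Vg: "V = (\<lambda>y. sqrt (g2 y))" by (simp add: V_def g2_def nG)
  have g2x: "g2 x > 0" using nG[of x] zero_le_power2[of "norm (G x)"] unfolding g2_def by linarith
  define W where "W = sqrt (g2 x)"
  have Wp: "W > 0" using g2x by (simp add: W_def)
  define DG where "DG k v = (\<Sum>l\<in>UNIV. v$l * H k l x)" for k v
  have dsq: "((\<lambda>y. \<Sum>k\<in>UNIV. G y $ k * G y $ k) has_derivative
      (\<lambda>v. \<Sum>k\<in>UNIV. G x $ k * DG k v + DG k v * G x $ k)) (at x within S)"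
    unfolding DG_def by (rule has_derivative_sum) (rule has_derivative_mult[OF dGw[OF xS] dGw[OF xS]])
  have dg2: "(g2 has_derivative (\<lambda>v. \<Sum>k\<in>UNIV. G x $ k * DG k v + DG k v * G x $ k)) (at x within S)"
    using has_derivative_add[OF has_derivative_const[of 1] dsq] unfolding g2_def[abs_def] by simp
  define Lv where "Lv v = (\<Sum>k\<in>UNIV. G x $ k * DG k v + DG k v * G x $ k) * (inverse (sqrt (g2 x)) / 2)" for v
  have dV: "(V has_derivative Lv) (at x within S)"
    unfolding Vg Lv_def[abs_def] by (rule DERIV_compose_FDERIV[OF DERIV_real_sqrt[OF g2x] dg2])
  have dVc: "(V has_derivative Lv) (at x within closure \<Omega>)" using dV by (simp add: S_def)
  have Vdiff: "V differentiable (at x within closure \<Omega>)" using dVc by (rule differentiableI)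
  have fdV: "frechet_derivative V (at x within closure \<Omega>) = Lv"
    using deriv_unique_closure[OF opn cvx ne xS[unfolded S_def] _ dVc] Vdiff frechet_derivative_works by blast
  have gV: "gradw (closure \<Omega>) V x \<bullet> \<nu> x = Lv (\<nu> x)"
    using gradw_inner[OF Vdiff] fdV by simp
  have nPx: "norm (P x) > 0" using Px by simp
  have \<nu>x: "\<nu> x $ l = (1 / norm (P x)) * Pk l x" for l
    using normal xf by (simp add: P_def PPk[symmetric])
  have LvA: "Lv (\<nu> x) = (\<Sum>k\<in>UNIV. G x $ k * DG k (\<nu> x)) / W"
    unfolding Lv_def W_def using g2x
    by (simp add: sum.distrib[symmetric] field_simps mult.commute sum_distrib_left[symmetric])
  have s1: "(\<Sum>k\<in>UNIV. G x $ k * DG k (\<nu> x)) = (1 / norm (P x)) * (\<Sum>k\<in>UNIV. \<Sum>l\<in>UNIV. G x $ k * Pk l x * H k l x)"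
    by (simp add: DG_def \<nu>x sum_distrib_left algebra_simps)
  have s2: "A = (\<Sum>k\<in>UNIV. \<Sum>l\<in>UNIV. G x $ k * Pk l x * H k l x)"
  proof -
    have "A = (\<Sum>k\<in>UNIV. \<Sum>l\<in>UNIV. G x $ l * H k l x * Pk k x)"
      by (simp add: A_def sum_distrib_right)
    also have "\<dots> = (\<Sum>l\<in>UNIV. \<Sum>k\<in>UNIV. G x $ l * H k l x * Pk k x)"
      by (rule sum.swap)
    also have "\<dots> = (\<Sum>l\<in>UNIV. \<Sum>k\<in>UNIV. G x $ l * Pk k x * H l k x)"
      by (simp add: symx mult.commute mult.left_commute)
    finally show ?thesis .
  qed
  have key: "gradw (closure \<Omega>) V x \<bullet> \<nu> x \<le> 0"
  proof -
    have "gradw (closure \<Omega>) V x \<bullet> \<nu> x = ((1 / norm (P x)) * A) / W"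
      using gV LvA s1 s2 by simp
    moreover have "((1 / norm (P x)) * A) / W \<le> 0"
      using A nPx Wp by (simp add: divide_nonpos_pos mult_nonneg_nonpos)
    ultimately show ?thesis by simp
  qed
  have Gnu: "G x \<bullet> \<nu> x = 0" using neumann xf t by (simp add: G_def S_def U_def[abs_def])
  have Geq: "gradw (closure \<Omega>) (\<lambda>z. u z t) = G" by (simp add: G_def S_def U_def[abs_def])
  show "(let du = gradw (closure \<Omega>) (\<lambda>z. u z t) x;
          W = sqrt (1 + (norm du)\<^sup>2);
          v = (\<lambda>y. sqrt (1 + (norm (gradw (closure \<Omega>) (\<lambda>z. u z t) y))\<^sup>2));
          nvec = ((- 1 / W) *\<^sub>R du, 1 / W) :: (real^'n) \<times> real;
          Dv = (gradw (closure \<Omega>) v x, 0) :: (real^'n) \<times> real;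
          DGv = Dv - (Dv \<bullet> nvec) *\<^sub>R nvec
      in DGv \<bullet> (\<nu> x, 0) \<le> 0)"
    unfolding Let_def Geq V_def[symmetric]
    using Gnu key by (simp add: inner_diff_left)
qed

end
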